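(* Let $(\mathcal{S},\mathcal{A},r,p)$ be a weakly communicating MDP with $S$ states and $A$ actions, let $T$ be the horizon, $H\ge 2$, $\delta\in(0,1)$, and let $(s_t,a_t)_{t=1}^T$ be the state-action sequence generated by Optimistic Q-learning (defined in the context) with parameters $H,\delta$. Let $V^*,Q^*$ be the optimal value and Q-functions of the discounted MDP with discount factor $\gamma=1-1/H$. Then with probability at least $1-\delta$, $$\sum_{t=1}^T\big(V^*(s_t)-Q^*(s_t,a_t)\big)\le 4HSA+24\,\mathrm{sp}(v^* )\sqrt{HSAT\ln\tfrac{2T}{\delta}}.$$
   Context: The MDP has finite state/action sets, known reward $r:\mathcal{S}\times\mathcal{A}\to[0,1]$, unknown kernel $p$; weakly communicating means $\mathcal{S}$ splits into states transient under every stationary policy and a set in which any two states are mutually accessible under some stationary policy. There exist $J^*\in[0,1]$ and $q^*$ with $J^*+q^*(s,a)=r(s,a)+\mathbb{E}_{s'\sim p(\cdot|s,a)}[v^*(s')]$, $v^*(s)=\max_a q^*(s,a)$, and $\mathrm{sp}(v^* )=\max_s v^*(s)-\min_s v^*(s)$. Discounted: $Q^*(s,a)=r(s,a)+\gamma\mathbb{E}_{s'\sim p(\cdot|s,a)}[V^*(s')]$, $V^*(s)=\max_aQ^*(s,a)$. Optimistic Q-learning with parameters $H\ge2,\delta$: $\gamma=1-1/H$, $\hat V_1\equiv H$, $Q_1=\hat Q_1\equiv H$, $n_1\equiv0$, $\alpha_\tau=\frac{H+1}{H+\tau}$, $b_\tau=4\,\mathrm{sp}(v^* )\sqrt{\frac{H}{\tau}\ln\frac{2T}{\delta}}$.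 For $t=1,\dots,T$: from the current state $s_t$ (with $s_1$ arbitrary) take $a_t\in\arg\max_a\hat Q_t(s_t,a)$, observe $s_{t+1}\sim p(\cdot|s_t,a_t)$; set $n_{t+1}(s_t,a_t)=n_t(s_t,a_t)+1$, $\tau=n_{t+1}(s_t,a_t)$, $Q_{t+1}(s_t,a_t)=(1-\alpha_\tau)Q_t(s_t,a_t)+\alpha_\tau[r(s_t,a_t)+\gamma\hat V_t(s_{t+1})+b_\tau]$, $\hat Q_{t+1}(s_t,a_t)=\min\{\hat Q_t(s_t,a_t),Q_{t+1}(s_t,a_t)\}$, $\hat V_{t+1}(s_t)=\max_a\hat Q_{t+1}(s_t,a)$; all other entries unchanged. *)

theory Defs
  imports "HOL-Probability.Probability"
begin

definition span :: "('s::finite \<Rightarrow> real) \<Rightarrow> real" where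
  "span v = Max (range v) - Min (range v)"

definition step_rel :: "('s \<Rightarrow> 'a \<Rightarrow> 's pmf) \<Rightarrow> ('s \<Rightarrow> 'a pmf) \<Rightarrow> ('s \<times> 's) set" where
  "step_rel p pol = {(x, y). \<exists>a \<in> set_pmf (pol x). y \<in> set_pmf (p x a)}"

definition accessible :: "('s \<Rightarrow> 'a \<Rightarrow> 's pmf) \<Rightarrow> ('s \<Rightarrow> 'a pmf) \<Rightarrow> 's \<Rightarrow> 's \<Rightarrow> bool" where
  "accessible p pol x y \<longleftrightarrow> (x, y) \<in> (step_rel p pol)\<^sup>*"

text \<open>A state of a finite Markov chain is transient iff it can reach a state
  from which it is not accessible.\<close>
definition transient :: "('s \<Rightarrow> 'a \<Rightarrow> 's pmf) \<Rightarrow> ('s \<Rightarrow> 'a pmf) \<Rightarrow> 's \<Rightarrow> bool" where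
  "transient p pol x \<longleftrightarrow> (\<exists>y. accessible p pol x y \<and> \<not> accessible p pol y x)"

definition weakly_communicating :: "('s \<Rightarrow> 'a \<Rightarrow> 's pmf) \<Rightarrow> bool" where
  "weakly_communicating p \<longleftrightarrow>
     (\<exists>C. (\<forall>s. s \<notin> C \<longrightarrow> (\<forall>pol. transient p pol s)) \<and>
          (\<forall>x\<in>C. \<forall>y\<in>C. \<exists>pol. accessible p pol x y \<and> accessible p pol y x))"

text \<open>Algorithm state: (Q, Qhat, Vhat, n).\<close>
type_synonym ('s, 'a) oq_state =
  "('s \<Rightarrow> 'a \<Rightarrow> real) \<times> ('s \<Rightarrow> 'a \<Rightarrow> real) \<times> ('s \<Rightarrow> real) \<times> ('s \<Rightarrow> 'a \<Rightarrow> nat)"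

definition oq_init :: "real \<Rightarrow> ('s, 'a) oq_state" where
  "oq_init H = ((\<lambda>_ _. H), (\<lambda>_ _. H), (\<lambda>_. H), (\<lambda>_ _. 0))"

text \<open>Update after taking action a in state s and observing s'.
  Parameters: reward r, H, delta, T, and sp = sp(v*).\<close>
definition oq_update ::
  "('s \<Rightarrow> 'a::finite \<Rightarrow> real) \<Rightarrow> real \<Rightarrow> real \<Rightarrow> nat \<Rightarrow> real \<Rightarrow>
   ('s, 'a) oq_state \<Rightarrow> 's \<Rightarrow> 'a \<Rightarrow> 's \<Rightarrow> ('s, 'a) oq_state" where
  "oq_update r H \<delta> T sp \<sigma> s a s' =
     (case \<sigma> of (Q, Qh, Vh, n) \<Rightarrow>
       let \<tau> = n s a + 1;
           \<gamma> = 1 - 1 / H;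
           \<alpha> = (H + 1) / (H + real \<tau>);
           b = 4 * sp * sqrt (H / real \<tau> * ln (2 * real T / \<delta>));
           qnew = (1 - \<alpha>) * Q s a + \<alpha> * (r s a + \<gamma> * Vh s' + b);
           Q' = Q(s := (Q s)(a := qnew));
           Qh' = Qh(s := (Qh s)(a := min (Qh s a) qnew));
           Vh' = Vh(s := Max (range (Qh' s)));
           n' = n(s := (n s)(a := \<tau>))
       in (Q', Qh', Vh', n'))"

text \<open>Distribution of the remaining k state-action pairs, starting from algorithm state
  sigma in MDP state s. Actions are chosen greedily w.r.t. Qhat via a tie-breaking
  rule sel.\<close>
primrec oq_run ::
  "('s \<Rightarrow> 'a::finite \<Rightarrow> real) \<Rightarrow> ('s \<Rightarrow> 'a \<Rightarrow> 's pmf) \<Rightarrow> real \<Rightarrow> real \<Rightarrow> nat \<Rightarrow> real \<Rightarrow>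
   (('s \<Rightarrow> 'a \<Rightarrow> real) \<Rightarrow> 's \<Rightarrow> 'a) \<Rightarrow>
   nat \<Rightarrow> ('s, 'a) oq_state \<Rightarrow> 's \<Rightarrow> ('s \<times> 'a) list pmf" where
  "oq_run r p H \<delta> T sp sel 0 \<sigma> s = return_pmf []"
| "oq_run r p H \<delta> T sp sel (Suc k) \<sigma> s =
     (let a = sel (fst (snd \<sigma>)) s in
      bind_pmf (p s a) (\<lambda>s'.
        map_pmf (\<lambda>xs. (s, a) # xs)
          (oq_run r p H \<delta> T sp sel k (oq_update r H \<delta> T sp \<sigma> s a s') s')))"

definition oq_trajectory ::
  "('s \<Rightarrow> 'a::finite \<Rightarrow> real) \<Rightarrow> ('s \<Rightarrow> 'a \<Rightarrow> 's pmf) \<Rightarrow> real \<Rightarrow> real \<Rightarrow> nat \<Rightarrow> real \<Rightarrow>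
   (('s \<Rightarrow> 'a \<Rightarrow> real) \<Rightarrow> 's \<Rightarrow> 'a) \<Rightarrow> 's \<Rightarrow> ('s \<times> 'a) list pmf" where
  "oq_trajectory r p H \<delta> T sp sel s1 = oq_run r p H \<delta> T sp sel T (oq_init H) s1"

end

theory Submission
  imports Defs
begin

lemma sum_update_UNIV:
  fixes f g :: "'z::finite \<Rightarrow> real"
  assumes "\<forall>z. z \<noteq> z0 \<longrightarrow> g z = f z"
  shows "sum g UNIV = sum f UNIV + (g z0 - f z0)"
proof -
  have "sum g UNIV = g z0 + sum g (UNIV - {z0})" by (simp add: sum.remove)
  moreover have "sum g (UNIV - {z0}) = sum f (UNIV - {z0})" using assms by (intro sum.cong) auto
  moreover have "sum f UNIV = f z0 + sum f (UNIV - {z0})" by (simp add: sum.remove)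
  ultimately show ?thesis by simp
qed

locale oqa =
  fixes r :: "'s::finite \<Rightarrow> 'a::finite \<Rightarrow> real"
    and p :: "'s \<Rightarrow> 'a \<Rightarrow> 's pmf"
    and H \<delta> :: real and T :: nat and sp :: real
    and sel :: "('s \<Rightarrow> 'a \<Rightarrow> real) \<Rightarrow> 's \<Rightarrow> 'a"
    and Qs :: "'s \<Rightarrow> 'a \<Rightarrow> real" and Vs :: "'s \<Rightarrow> real"
  assumes r_range: "\<forall>s a. 0 \<le> r s a \<and> r s a \<le> 1"
    and H_ge: "H \<ge> 2"
    and \<delta>_range: "0 < \<delta> \<and> \<delta> < 1"
    and disc_bellman: "\<forall>s a. Qs s a = r s a + (1 - 1 / H) * measure_pmf.expectation (p s a) Vs"
    and V_def: "\<forall>s. Vs s = Max (range (Qs s))"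
    and sel_greedy: "\<forall>Qh s. Qh s (sel Qh s) = Max (range (Qh s))"
    and sp_nonneg: "sp \<ge> 0"
    and span_Vs: "Max (range Vs) - Min (range Vs) \<le> 2 * sp"
begin

definition "gam = 1 - 1 / H"
definition "alpha (\<tau>::nat) = (H + 1) / (H + real \<tau>)"
definition "iota = ln (2 * real T / \<delta>)"
definition "bb (\<tau>::nat) = 4 * sp * sqrt (H / real \<tau> * iota)"
definition "EV x y = measure_pmf.expectation (p x y) Vs"

abbreviation "Qf \<sigma> \<equiv> fst \<sigma>"
abbreviation "Qhf \<sigma> \<equiv> fst (snd \<sigma>)"
abbreviation "Vhf \<sigma> \<equiv> fst (snd (snd \<sigma>))"
abbreviation "nf \<sigma> \<equiv> snd (snd (snd \<sigma>))"

abbreviation "upd \<equiv> oq_update r H \<delta> T sp"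

lemma upd_eq: "upd \<sigma> s a s' =
  (let j = nf \<sigma> s a;
       qn = (1 - alpha (Suc j)) * Qf \<sigma> s a + alpha (Suc j) * (r s a + gam * Vhf \<sigma> s' + bb (Suc j));
       Qh' = (Qhf \<sigma>)(s := (Qhf \<sigma> s)(a := min (Qhf \<sigma> s a) qn))
   in ((Qf \<sigma>)(s := (Qf \<sigma> s)(a := qn)), Qh', (Vhf \<sigma>)(s := Max (range (Qh' s))),
       (nf \<sigma>)(s := (nf \<sigma> s)(a := Suc j))))"
  by (cases \<sigma>) (simp add: oq_update_def alpha_def bb_def iota_def gam_def Let_def add.commute)

lemma nf_upd: "nf (upd \<sigma> s a s') = (nf \<sigma>)(s := (nf \<sigma> s)(a := Suc (nf \<sigma> s a)))"
  by (simp add: upd_eq Let_def)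

definition xstep :: "('s \<times> 'a \<times> nat \<Rightarrow> 's) \<Rightarrow> ('s, 'a) oq_state \<times> ('s \<Rightarrow> 'a \<Rightarrow> real) \<times> 's
    \<Rightarrow> ('s, 'a) oq_state \<times> ('s \<Rightarrow> 'a \<Rightarrow> real) \<times> 's" where
  "xstep \<omega> X = (case X of (\<sigma>, A, s) \<Rightarrow>
    let a = sel (Qhf \<sigma>) s; j = nf \<sigma> s a; s' = \<omega> (s, a, j);
        \<Delta> = Vhf \<sigma> s' - Vs s';
        A' = A(s := (A s)(a := (1 - alpha (Suc j)) * A s a + alpha (Suc j) * gam * \<Delta>))
    in (upd \<sigma> s a s', A', s'))"

primrec drun :: "nat \<Rightarrow> ('s \<times> 'a \<times> nat \<Rightarrow> 's) \<Rightarrow> ('s, 'a) oq_state \<times> ('s \<Rightarrow> 'a \<Rightarrow> real) \<times> 's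
    \<Rightarrow> ('s \<times> 'a) list" where
  "drun 0 \<omega> X = []"
| "drun (Suc k) \<omega> X = (snd (snd X), sel (Qhf (fst X)) (snd (snd X))) # drun k \<omega> (xstep \<omega> X)"

lemma drun_indep:
  assumes "\<forall>x y i. nf (fst X) x y \<le> i \<longrightarrow> \<omega> (x,y,i) = \<omega>' (x,y,i)"
  shows "drun k \<omega> X = drun k \<omega>' X"
  using assms
proof (induction k arbitrary: X)
  case 0
  then show ?case by simp
next
  case (Suc k)
  obtain \<sigma> A s where X: "X = (\<sigma>, A, s)" by (cases X) auto
  let ?a = "sel (Qhf \<sigma>) s"
  have e: "\<omega> (s, ?a, nf \<sigma> s ?a) = \<omega>' (s, ?a, nf \<sigma> s ?a)" using Suc.prems X by auto
  have xs: "xstep \<omega> X = xstep \<omega>' X" unfolding xstep_def X using e by (simp add: Let_def)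
  have "\<forall>x y i. nf (fst (xstep \<omega> X)) x y \<le> i \<longrightarrow> \<omega> (x,y,i) = \<omega>' (x,y,i)"
  proof (intro allI impI)
    fix x y i assume "nf (fst (xstep \<omega> X)) x y \<le> i"
    then have "nf \<sigma> x y \<le> i" unfolding xstep_def X by (auto simp: Let_def nf_upd split: if_splits)
    then show "\<omega> (x,y,i) = \<omega>' (x,y,i)" using Suc.prems X by auto
  qed
  then have "drun k \<omega> (xstep \<omega> X) = drun k \<omega>' (xstep \<omega> X)" using Suc.IH by blast
  then show ?case using xs by simp
qed

definition "Idx = (UNIV :: 's set) \<times> (UNIV :: 'a set) \<times> {..<T}"
definition "Omega = Pi_pmf Idx undefined (\<lambda>(x,y,i). p x y)"

lemma finite_Idx: "finite Idx" unfolding Idx_def by auto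

lemma coupling:
  assumes "\<forall>x y. nf \<sigma> x y + k \<le> T"
  shows "map_pmf (\<lambda>\<omega>. drun k \<omega> (\<sigma>, A, s)) Omega = oq_run r p H \<delta> T sp sel k \<sigma> s"
  using assms
proof (induction k arbitrary: \<sigma> A s)
  case 0
  then show ?case by simp
next
  case (Suc k)
  define a where "a = sel (Qhf \<sigma>) s"
  define j where "j = nf \<sigma> s a"
  define e where "e = (s, a, j)"
  have jT: "j < T" proof -
    have "nf \<sigma> s a + Suc k \<le> T" using Suc.prems by blast
    then show ?thesis unfolding j_def by linarith
  qed
  have eI: "e \<in> Idx" unfolding e_def Idx_def using jT by auto
  have Ins: "Idx = insert e (Idx - {e})" using eI by auto
  define A' where "A' y = A(s := (A s)(a := (1 - alpha (Suc j)) * A s a + alpha (Suc j) * gam * (Vhf \<sigma> y - Vs y)))" for y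
  define X' where "X' y = (upd \<sigma> s a y, A' y, y)" for y
  have xs: "xstep f (\<sigma>, A, s) = X' (f e)" for f
    unfolding xstep_def X'_def A'_def e_def j_def a_def by (simp add: Let_def)
  have nX: "nf (fst (X' y)) = (nf \<sigma>)(s := (nf \<sigma> s)(a := Suc j))" for y
    unfolding X'_def by (simp add: nf_upd j_def)
  have indep: "drun k (f(e := z)) (X' y) = drun k f (X' y)" for f z y
    by (rule drun_indep) (auto simp: nX e_def)
  have IH: "map_pmf (\<lambda>f. drun k f (X' y)) Omega = oq_run r p H \<delta> T sp sel k (upd \<sigma> s a y) y" for y
    unfolding X'_def
  proof (rule Suc.IH)
    show "\<forall>x ya. nf (upd \<sigma> s a y) x ya + k \<le> T"
    proof (intro allI)
      fix x ya
      have "nf \<sigma> x ya + Suc k \<le> T" using Suc.prems by blast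
      then show "nf (upd \<sigma> s a y) x ya + k \<le> T" by (auto simp: nf_upd j_def)
    qed
  qed
  have rem: "map_pmf (\<lambda>f. drun k f (X' y)) (Pi_pmf (Idx - {e}) undefined (\<lambda>(x,y,i). p x y))
           = map_pmf (\<lambda>f. drun k f (X' y)) Omega" for y
    unfolding Omega_def
    by (subst Pi_pmf_remove[OF finite_Idx]) (simp add: pmf.map_comp o_def indep[where z=undefined])
  have Om: "Omega = map_pmf (\<lambda>(y,f). f(e:=y)) (pair_pmf (p s a) (Pi_pmf (Idx - {e}) undefined (\<lambda>(x,y,i). p x y)))"
  proof -
    have "Pi_pmf (insert e (Idx - {e})) undefined (\<lambda>(x,y,i). p x y)
        = map_pmf (\<lambda>(y,f). f(e:=y)) (pair_pmf ((\<lambda>(x,y,i). p x y) e) (Pi_pmf (Idx - {e}) undefined (\<lambda>(x,y,i). p x y)))"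
      by (rule Pi_pmf_insert) (use finite_Idx in auto)
    then show ?thesis unfolding Omega_def using eI by (simp add: insert_absorb e_def)
  qed
  have fe: "(\<lambda>\<omega>. drun (Suc k) \<omega> (\<sigma>, A, s)) \<circ> (\<lambda>(y,f). f(e:=y)) = (\<lambda>(y, f). (s, a) # drun k f (X' y))"
    by (auto simp: fun_eq_iff xs indep a_def)
  have "map_pmf (\<lambda>\<omega>. drun (Suc k) \<omega> (\<sigma>, A, s)) Omega
      = map_pmf (\<lambda>(y, f). (s, a) # drun k f (X' y))
          (pair_pmf (p s a) (Pi_pmf (Idx - {e}) undefined (\<lambda>(x,y,i). p x y)))"
    unfolding Om pmf.map_comp fe ..
  also have "\<dots> = bind_pmf (p s a) (\<lambda>y. map_pmf (\<lambda>xs. (s, a) # xs)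
                    (map_pmf (\<lambda>f. drun k f (X' y)) (Pi_pmf (Idx - {e}) undefined (\<lambda>(x,y,i). p x y))))"
    by (simp add: pair_pmf_def map_bind_pmf bind_return_pmf map_pmf_def bind_assoc_pmf case_prod_unfold)
  also have "\<dots> = oq_run r p H \<delta> T sp sel (Suc k) \<sigma> s"
    by (simp add: rem IH a_def Let_def)
  finally show ?case .
qed

end

context oqa begin

lemma H_pos: "H > 0" using H_ge by simp
lemma gam_ge0: "gam \<ge> 0" using H_ge unfolding gam_def by (simp add: field_simps)
lemma gam_le1: "gam \<le> 1" using H_ge unfolding gam_def by simp

lemma exp_le: fixes f :: "'s \<Rightarrow> real" assumes "\<forall>x. f x \<le> c"
  shows "measure_pmf.expectation P f \<le> c"
  by (rule measure_pmf.integral_le_const) (use assms in \<open>auto simp: integrable_measure_pmf_finite\<close>)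
lemma exp_ge: fixes f :: "'s \<Rightarrow> real" assumes "\<forall>x. c \<le> f x"
  shows "c \<le> measure_pmf.expectation P f"
  by (rule measure_pmf.integral_ge_const) (use assms in \<open>auto simp: integrable_measure_pmf_finite\<close>)

lemma Qs_eq: "Qs x a = r x a + gam * EV x a"
  using disc_bellman unfolding gam_def EV_def by auto

lemma Qs_le_Vs: "Qs x a \<le> Vs x"
  using V_def by (simp add: Max_ge)

lemma Vs_attain: "\<exists>a. Vs x = Qs x a"
proof -
  have "Max (range (Qs x)) \<in> range (Qs x)" by (rule Max_in) auto
  then show ?thesis using V_def by (metis rangeE)
qed

lemma Vs_le_max: "Vs x \<le> Max (range Vs)" by (simp add: Max_ge)
lemma Vs_ge_min: "Min (range Vs) \<le> Vs x" by (simp add: Min_le)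

lemma EV_le: "EV x a \<le> Max (range Vs)"
  unfolding EV_def by (rule exp_le) (simp add: Vs_le_max)
lemma EV_ge: "Min (range Vs) \<le> EV x a"
  unfolding EV_def by (rule exp_ge) (simp add: Vs_ge_min)

lemma Vs_le_H: "Vs x \<le> H"
proof -
  let ?m = "Max (range Vs)"
  have "?m \<in> range Vs" by (rule Max_in) auto
  then obtain x0 where x0: "Vs x0 = ?m" by (metis rangeE)
  obtain a where a: "Vs x0 = Qs x0 a" using Vs_attain by blast
  have "Qs x0 a \<le> 1 + gam * ?m"
    using r_range EV_le[of x0 a] gam_ge0 unfolding Qs_eq
    by (smt (verit, best) mult_left_mono)
  then have "?m \<le> 1 + gam * ?m" using x0 a by simp
  then have "?m \<le> H" using H_pos unfolding gam_def by (simp add: field_simps)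
  then show ?thesis using Vs_le_max[of x] by simp
qed

lemma Vs_ge0: "0 \<le> Vs x"
proof -
  define m where "m = Min (range Vs)"
  have "m \<in> range Vs" unfolding m_def by (rule Min_in) auto
  then obtain x0 where x0: "Vs x0 = m" by (metis rangeE)
  fix a :: 'a
  have "gam * m \<le> Qs x0 a"
    using r_range EV_ge[of x0 a] gam_ge0 unfolding Qs_eq m_def[symmetric]
    by (smt (verit, best) mult_left_mono)
  moreover have "Qs x0 a \<le> Vs x0" by (rule Qs_le_Vs)
  ultimately have "gam * m \<le> m" using x0 by linarith
  moreover have "m - gam * m = m / H" unfolding gam_def using H_pos by (simp add: field_simps)
  ultimately have "m / H \<ge> 0" by linarith
  then have "0 \<le> m" using H_pos by (simp add: zero_le_divide_iff)
  then show ?thesis using Vs_ge_min[of x] unfolding m_def by linarith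
qed

lemma Qs_ge0: "0 \<le> Qs x a"
proof -
  have "0 \<le> EV x a" unfolding EV_def by (rule exp_ge) (simp add: Vs_ge0)
  then show ?thesis using r_range gam_ge0 unfolding Qs_eq by (simp add: add_nonneg_nonneg)
qed

lemma Qs_le_H: "Qs x a \<le> H" using Qs_le_Vs Vs_le_H order.trans by blast

lemma span_Vs_ge0: "0 \<le> Max (range Vs) - Min (range Vs)"
  using Vs_le_max[of undefined] Vs_ge_min[of undefined] by simp

lemma gap_le: "Vs x - Qs x a \<le> 1 + 2 * sp"
proof -
  obtain a' where a': "Vs x = Qs x a'" using Vs_attain by blast
  have "EV x a' - EV x a \<le> Max (range Vs) - Min (range Vs)" using EV_le[of x a'] EV_ge[of x a] by linarith
  then have "gam * (EV x a' - EV x a) \<le> Max (range Vs) - Min (range Vs)"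
    using gam_ge0 gam_le1 span_Vs_ge0
  proof -
    have "gam * (EV x a' - EV x a) \<le> gam * (Max (range Vs) - Min (range Vs))"
      using \<open>EV x a' - EV x a \<le> _\<close> gam_ge0 by (rule mult_left_mono)
    also have "\<dots> \<le> Max (range Vs) - Min (range Vs)"
      by (intro mult_left_le_one_le) (use gam_le1 gam_ge0 span_Vs_ge0 in auto)
    finally show ?thesis .
  qed
  then show ?thesis using a' r_range[rule_format, of x a] r_range[rule_format, of x a'] span_Vs unfolding Qs_eq by (simp add: right_diff_distrib)
qed

end

lemma sqrt_pair_bound:
  fixes u v :: real
  assumes "0 \<le> u" "u \<le> v" "0 < v" "v\<^sup>2 = u\<^sup>2 + 1"
  shows "2 * u + 1 / v \<le> 2 * v"
proof -
  have "(u * v)\<^sup>2 = u\<^sup>2 * v\<^sup>2" by (simp add: power_mult_distrib)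
  also have "\<dots> = u\<^sup>2 * (u\<^sup>2 + 1)" using assms(4) by simp
  also have "\<dots> \<le> (u\<^sup>2 + 1/2)\<^sup>2" by (simp add: power2_eq_square algebra_simps)
  finally have "(u * v)\<^sup>2 \<le> (u\<^sup>2 + 1/2)\<^sup>2" .
  then have uv: "u * v \<le> u\<^sup>2 + 1/2"
    by (rule power2_le_imp_le) simp
  have "2 * u * v + 1 \<le> 2 * v\<^sup>2" using uv assms(4) by simp
  moreover have "(2 * u + 1 / v) * v = 2 * u * v + 1" using assms(3) by (simp add: field_simps)
  moreover have "2 * v * v = 2 * v\<^sup>2" by (simp add: power2_eq_square)
  ultimately have "(2 * u + 1 / v) * v \<le> 2 * v * v" by simp
  then show ?thesis using assms(3) by (simp add: mult_le_cancel_right)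
qed
lemma sum_inv_sqrt_aux: "(\<Sum>j<Suc N. 1 / sqrt (real j)) \<le> 2 * sqrt (real N)"
proof (induction N)
  case 0
  then show ?case by simp
next
  case (Suc N)
  have "(\<Sum>j<Suc (Suc N). 1 / sqrt (real j)) = (\<Sum>j<Suc N. 1 / sqrt (real j)) + 1 / sqrt (real (Suc N))"
    by simp
  also have "\<dots> \<le> 2 * sqrt (real N) + 1 / sqrt (real (Suc N))" using Suc.IH by simp
  also have "\<dots> \<le> 2 * sqrt (real (Suc N))"
    by (rule sqrt_pair_bound) (auto simp: real_sqrt_le_iff)
  finally show ?case .
qed

lemma sum_inv_sqrt: "(\<Sum>j<N. 1 / sqrt (real j)) \<le> 2 * sqrt (real N)"
proof (cases N)
  case 0
  then show ?thesis by simp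
next
  case (Suc m)
  have "(\<Sum>j<N. 1 / sqrt (real j)) \<le> 2 * sqrt (real m)" using sum_inv_sqrt_aux[of m] Suc by simp
  also have "\<dots> \<le> 2 * sqrt (real N)" using Suc by simp
  finally show ?thesis .
qed

lemma wt_sq_step:
  fixes a H :: real assumes a: "a \<ge> 1" and H_ge: "H \<ge> 2"
  shows "(a / (H + a + 1))\<^sup>2 * (2 * H / a) + ((H + 1) / (H + a + 1))\<^sup>2 \<le> 2 * H / (a + 1)"
proof -
  have Hp: "H > 0" using H_ge by simp
  have d: "H + a + 1 > 0" using Hp a by simp
  have lhs: "(a / (H + a + 1))\<^sup>2 * (2 * H / a) + ((H + 1) / (H + a + 1))\<^sup>2
      = (2 * H * a + (H + 1)\<^sup>2) / (H + a + 1)\<^sup>2"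
  proof -
    have "(a / (H + a + 1))\<^sup>2 * (2 * H / a) = 2 * H * a / (H + a + 1)\<^sup>2"
      using a d by (simp add: power2_eq_square)
    moreover have "((H + 1) / (H + a + 1))\<^sup>2 = (H + 1)\<^sup>2 / (H + a + 1)\<^sup>2"
      by (simp add: power_divide)
    ultimately show ?thesis by (simp add: add_divide_distrib)
  qed
  have key: "(2 * H * a + (H + 1)\<^sup>2) * (a + 1) \<le> 2 * H * (H + a + 1)\<^sup>2"
  proof -
    have h1: "0 \<le> H * H * a" using Hp a by simp
    have h2: "0 \<le> H * H * H" using Hp by simp
    have h3: "0 \<le> H * a * a" using Hp a by simp
    have "2 * 2 \<le> H * H" using H_ge by (intro mult_mono) auto
    then have h5: "1 \<le> H * H" by simp
    have "1 * a \<le> (H * H) * a" using h5 a by (intro mult_right_mono) auto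
    then have h4: "a \<le> H * H * a" by simp
    have e1: "(2 * H * a + (H + 1)\<^sup>2) * (a + 1) = 2*H*a*a + 2*H*a + H*H*a + 2*H*a + a + H*H + 2*H + 1"
      by (simp add: power2_eq_square algebra_simps)
    have e2: "2 * H * (H + a + 1)\<^sup>2 = 2*H*H*H + 2*H*a*a + 2*H + 4*H*H*a + 4*H*H + 4*H*a"
      by (simp add: power2_eq_square algebra_simps)
    show ?thesis unfolding e1 e2 using h1 h2 h3 h4 h5 Hp by linarith
  qed
  have "(2 * H * a + (H + 1)\<^sup>2) / (H + a + 1)\<^sup>2 \<le> 2 * H / (a + 1)"
    using key d a by (simp add: divide_simps)
  then show ?thesis using lhs by simp
qed
context oqa begin

lemma alpha_1: "alpha (Suc 0) = 1" unfolding alpha_def using H_pos by simp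
lemma alpha_ge0: "0 \<le> alpha \<tau>" unfolding alpha_def using H_pos by simp
lemma alpha_le1: "\<tau> \<ge> 1 \<Longrightarrow> alpha \<tau> \<le> 1" unfolding alpha_def using H_pos by simp
lemma one_minus_alpha: "1 - alpha (Suc \<tau>) = real \<tau> / (H + real (Suc \<tau>))"
  unfolding alpha_def using H_pos by (simp add: field_simps)

primrec wt :: "nat \<Rightarrow> nat \<Rightarrow> real" where
  "wt 0 i = 0"
| "wt (Suc \<tau>) i = (if i = \<tau> then alpha (Suc \<tau>) else (1 - alpha (Suc \<tau>)) * wt \<tau> i)"

definition M :: "('s \<times> 'a \<times> nat \<Rightarrow> 's) \<Rightarrow> 's \<Rightarrow> 'a \<Rightarrow> nat \<Rightarrow> real" where
  "M \<omega> x y \<tau> = (\<Sum>i<\<tau>. wt \<tau> i * (Vs (\<omega> (x, y, i)) - EV x y))"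

primrec beta :: "nat \<Rightarrow> real" where
  "beta 0 = 0"
| "beta (Suc \<tau>) = (1 - alpha (Suc \<tau>)) * beta \<tau> + alpha (Suc \<tau>) * bb (Suc \<tau>)"

lemma M_0: "M \<omega> x y 0 = 0" unfolding M_def by simp

lemma M_Suc: "M \<omega> x y (Suc \<tau>) = (1 - alpha (Suc \<tau>)) * M \<omega> x y \<tau> + alpha (Suc \<tau>) * (Vs (\<omega> (x, y, \<tau>)) - EV x y)"
  unfolding M_def by (simp add: sum_distrib_left mult.assoc)

lemma wt_nonneg: "0 \<le> wt \<tau> i"
proof (induction \<tau>)
  case 0 then show ?case by simp
next
  case (Suc \<tau>)
  have "0 \<le> 1 - alpha (Suc \<tau>)" using alpha_le1[of "Suc \<tau>"] by simp
  then show ?case using Suc alpha_ge0 by simp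
qed

lemma wt_sq: "\<tau> \<ge> 1 \<Longrightarrow> (\<Sum>i<\<tau>. (wt \<tau> i)\<^sup>2) \<le> 2 * H / real \<tau>"
proof (induction \<tau>)
  case 0 then show ?case by simp
next
  case (Suc \<tau>)
  show ?case
  proof (cases "\<tau> = 0")
    case True
    then show ?thesis using alpha_1 H_ge by simp
  next
    case False
    then have IH: "(\<Sum>i<\<tau>. (wt \<tau> i)\<^sup>2) \<le> 2 * H / real \<tau>" using Suc.IH by simp
    have "(\<Sum>i<Suc \<tau>. (wt (Suc \<tau>) i)\<^sup>2) = (1 - alpha (Suc \<tau>))\<^sup>2 * (\<Sum>i<\<tau>. (wt \<tau> i)\<^sup>2) + (alpha (Suc \<tau>))\<^sup>2"
      by (simp add: sum_distrib_left power_mult_distrib)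
    also have "\<dots> \<le> (1 - alpha (Suc \<tau>))\<^sup>2 * (2 * H / real \<tau>) + (alpha (Suc \<tau>))\<^sup>2"
      using IH by (intro add_right_mono mult_left_mono) auto
    also have "\<dots> = (real \<tau> / (H + real \<tau> + 1))\<^sup>2 * (2 * H / real \<tau>) + ((H + 1) / (H + real \<tau> + 1))\<^sup>2"
      by (simp only: one_minus_alpha) (simp add: alpha_def add_ac)
    also have "\<dots> \<le> 2 * H / (real \<tau> + 1)"
      by (rule wt_sq_step) (use False H_ge in auto)
    finally show ?thesis by (simp add: add.commute)
  qed
qed

end

lemma beta_step_alg:
  fixes u v H C :: real
  assumes u: "0 < u" and uv: "u \<le> v" and v2: "v\<^sup>2 = u\<^sup>2 + 1" and H: "H \<ge> 1" and C: "C \<ge> 0"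
  shows "(u\<^sup>2 / (H + (u\<^sup>2 + 1))) * (2 * (C / u)) + ((H + 1) / (H + (u\<^sup>2 + 1))) * (C / v) \<le> 2 * (C / v)"
proof -
  define D where "D = H + (u\<^sup>2 + 1)"
  have v: "0 < v" using u uv by simp
  have D: "0 < D" unfolding D_def using H by (simp add: add_pos_nonneg)
  have "u * v \<le> v * v" using uv v by (simp add: mult_right_mono)
  then have k: "2 * u * v + H + 1 \<le> 2 * D" unfolding D_def using v2 H by (simp add: power2_eq_square)
  have "(u\<^sup>2 / D) * (2 * (C / u)) + ((H + 1) / D) * (C / v) = C * (2 * u * v + H + 1) / (D * v)"
    using u v D by (simp add: field_simps power2_eq_square)
  also have "\<dots> \<le> C * (2 * D) / (D * v)"
    using k C D v by (intro divide_right_mono mult_left_mono) auto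
  also have "\<dots> = 2 * (C / v)" using D v by (simp add: field_simps)
  finally show ?thesis unfolding D_def .
qed

context oqa begin

definition "Cc = 4 * sp * sqrt (H * iota)"

lemma Cc_nonneg: "iota \<ge> 0 \<Longrightarrow> Cc \<ge> 0"
  unfolding Cc_def using sp_nonneg H_pos by simp

lemma bb_eq: assumes "iota \<ge> 0" shows "bb \<tau> = Cc / sqrt (real \<tau>)"
proof (cases "\<tau> = 0")
  case True then show ?thesis unfolding bb_def Cc_def by simp
next
  case False
  have "H / real \<tau> * iota = (H * iota) / real \<tau>" by simp
  then have "sqrt (H / real \<tau> * iota) = sqrt (H * iota) / sqrt (real \<tau>)"
    by (simp add: real_sqrt_divide)
  then show ?thesis unfolding bb_def Cc_def by simp
qed

lemma bb_nonneg: "iota \<ge> 0 \<Longrightarrow> bb \<tau> \<ge> 0"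
  using bb_eq Cc_nonneg by simp

lemma bb_mono: assumes "iota \<ge> 0" "1 \<le> \<tau>" "\<tau> \<le> \<tau>'" shows "bb \<tau>' \<le> bb \<tau>"
  unfolding bb_eq[OF assms(1)]
  by (rule divide_left_mono) (use assms Cc_nonneg in auto)

lemma beta_nonneg: "iota \<ge> 0 \<Longrightarrow> beta \<tau> \<ge> 0"
proof (induction \<tau>)
  case 0 then show ?case by simp
next
  case (Suc \<tau>)
  have "0 \<le> 1 - alpha (Suc \<tau>)" using alpha_le1[of "Suc \<tau>"] by simp
  then show ?case using Suc alpha_ge0 bb_nonneg by simp
qed

lemma beta_ge: "iota \<ge> 0 \<Longrightarrow> 1 \<le> \<tau> \<Longrightarrow> bb \<tau> \<le> beta \<tau>"
proof (induction \<tau>)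
  case 0 then show ?case by simp
next
  case (Suc \<tau>)
  show ?case
  proof (cases "\<tau> = 0")
    case True then show ?thesis using alpha_1 by simp
  next
    case False
    have a0: "0 \<le> 1 - alpha (Suc \<tau>)" using alpha_le1[of "Suc \<tau>"] by simp
    have "bb (Suc \<tau>) \<le> bb \<tau>" using bb_mono Suc.prems False by simp
    also have "\<dots> \<le> beta \<tau>" using Suc False by simp
    finally have "(1 - alpha (Suc \<tau>)) * bb (Suc \<tau>) \<le> (1 - alpha (Suc \<tau>)) * beta \<tau>"
      using a0 by (rule mult_left_mono)
    then show ?thesis by (simp add: algebra_simps)
  qed
qed

lemma beta_le: "iota \<ge> 0 \<Longrightarrow> beta \<tau> \<le> 2 * bb \<tau>"
proof (induction \<tau>)
  case 0 then show ?case using bb_nonneg by simp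
next
  case (Suc \<tau>)
  show ?case
  proof (cases "\<tau> = 0")
    case True then show ?thesis using alpha_1 bb_nonneg Suc.prems by simp
  next
    case False
    define u where "u = sqrt (real \<tau>)"
    define v where "v = sqrt (real (Suc \<tau>))"
    have u: "0 < u" unfolding u_def using False by simp
    have uv: "u \<le> v" unfolding u_def v_def by simp
    have u2: "u\<^sup>2 = real \<tau>" unfolding u_def by simp
    have v2: "v\<^sup>2 = u\<^sup>2 + 1" unfolding u_def v_def by simp
    have a0: "0 \<le> 1 - alpha (Suc \<tau>)" using alpha_le1[of "Suc \<tau>"] by simp
    have "beta (Suc \<tau>) \<le> (1 - alpha (Suc \<tau>)) * (2 * bb \<tau>) + alpha (Suc \<tau>) * bb (Suc \<tau>)"
      using Suc a0 by (simp add: mult_left_mono)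
    also have "\<dots> = (u\<^sup>2 / (H + (u\<^sup>2 + 1))) * (2 * (Cc / u)) + ((H + 1) / (H + (u\<^sup>2 + 1))) * (Cc / v)"
      unfolding bb_eq[OF Suc.prems] one_minus_alpha u2 u_def[symmetric] v_def[symmetric]
      by (simp add: alpha_def add_ac)
    also have "\<dots> \<le> 2 * (Cc / v)"
      by (rule beta_step_alg) (use u uv v2 H_ge Cc_nonneg Suc.prems in auto)
    also have "\<dots> = 2 * bb (Suc \<tau>)" unfolding bb_eq[OF Suc.prems] v_def ..
    finally show ?thesis .
  qed
qed

end

lemma Max_range_mono:
  fixes f g :: "'a::finite \<Rightarrow> real"
  assumes "\<And>a. f a \<le> g a"
  shows "Max (range f) \<le> Max (range g)"
proof -
  have "Max (range f) \<in> range f" by (rule Max_in) auto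
  then obtain a0 where "Max (range f) = f a0" by (metis rangeE)
  also have "\<dots> \<le> g a0" by (rule assms)
  also have "\<dots> \<le> Max (range g)" by (simp add: Max_ge)
  finally show ?thesis .
qed

context oqa begin

definition good :: "('s \<times> 'a \<times> nat \<Rightarrow> 's) \<Rightarrow> bool" where
  "good \<omega> \<longleftrightarrow> (\<forall>x y \<tau>. 1 \<le> \<tau> \<and> \<tau> \<le> T \<longrightarrow> \<bar>M \<omega> x y \<tau>\<bar> \<le> bb \<tau>)"

definition Inv :: "('s \<times> 'a \<times> nat \<Rightarrow> 's) \<Rightarrow> nat \<Rightarrow> ('s, 'a) oq_state \<times> ('s \<Rightarrow> 'a \<Rightarrow> real) \<times> 's \<Rightarrow> bool" where
  "Inv \<omega> t X \<longleftrightarrow> (case X of (\<sigma>, A, s) \<Rightarrow>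
     (\<forall>x y. Qf \<sigma> x y = Qs x y + A x y + gam * M \<omega> x y (nf \<sigma> x y) + beta (nf \<sigma> x y)) \<and>
     (\<forall>x y. Qhf \<sigma> x y \<le> Qf \<sigma> x y) \<and>
     (\<forall>x y. Qs x y \<le> Qhf \<sigma> x y) \<and>
     (\<forall>x. Vhf \<sigma> x = Max (range (Qhf \<sigma> x))) \<and>
     (\<forall>x y. 0 \<le> A x y) \<and>
     (\<forall>x y. Qhf \<sigma> x y \<le> H) \<and>
     (\<Sum>z\<in>UNIV. real (nf \<sigma> (fst z) (snd z))) = real t)"

definition "Phi \<sigma> A = (\<Sum>z\<in>UNIV. (H + real (nf \<sigma> (fst z) (snd z))) / H * A (fst z) (snd z))"
definition "W \<sigma> = (\<Sum>x\<in>UNIV. Vhf \<sigma> x)"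
definition "Gs N = (\<Sum>j<N. 3 * bb j)"
definition "Psi \<sigma> = (\<Sum>z\<in>UNIV. Gs (nf \<sigma> (fst z) (snd z)))"
definition "Pot X = (case X of (\<sigma>, A, s) \<Rightarrow> Phi \<sigma> A + W \<sigma> - Psi \<sigma> - (Vhf \<sigma> s - Vs s))"

lemma xstep_eq:
  fixes Q Qh :: "'s \<Rightarrow> 'a \<Rightarrow> real" and Vh :: "'s \<Rightarrow> real" and n :: "'s \<Rightarrow> 'a \<Rightarrow> nat"
    and s :: 's and \<omega> :: "'s \<times> 'a \<times> nat \<Rightarrow> 's" and A :: "'s \<Rightarrow> 'a \<Rightarrow> real"
  defines "a \<equiv> sel Qh s"
  defines "j \<equiv> n s a"
  defines "s' \<equiv> \<omega> (s, a, j)"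
  defines "qn \<equiv> (1 - alpha (Suc j)) * Q s a + alpha (Suc j) * (r s a + gam * Vh s' + bb (Suc j))"
  defines "Qh' \<equiv> Qh(s := (Qh s)(a := min (Qh s a) qn))"
  defines "Asa \<equiv> (1 - alpha (Suc j)) * A s a + alpha (Suc j) * gam * (Vh s' - Vs s')"
  shows "xstep \<omega> ((Q, Qh, Vh, n), A, s) =
     ((Q(s := (Q s)(a := qn)), Qh', Vh(s := Max (range (Qh' s))), n(s := (n s)(a := Suc j))),
      A(s := (A s)(a := Asa)), s')"
  unfolding xstep_def upd_eq assms by (simp add: Let_def)

lemma Max_const_le: fixes f :: "'a \<Rightarrow> real" assumes "\<And>a. f a \<le> c" shows "Max (range f) \<le> c"
  using Max_range_mono[of f "\<lambda>_. c"] assms by simp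

lemma step_concrete:
  fixes Q Qh :: "'s \<Rightarrow> 'a \<Rightarrow> real" and Vh :: "'s \<Rightarrow> real" and n :: "'s \<Rightarrow> 'a \<Rightarrow> nat"
    and s :: 's and \<omega> :: "'s \<times> 'a \<times> nat \<Rightarrow> 's" and A :: "'s \<Rightarrow> 'a \<Rightarrow> real"
  assumes good: "good \<omega>" and io: "iota \<ge> 0" and inv: "Inv \<omega> t ((Q, Qh, Vh, n), A, s)" and tT: "t < T"
  shows "Inv \<omega> (Suc t) (xstep \<omega> ((Q, Qh, Vh, n), A, s)) \<and>
         Vs s - Qs s (sel Qh s) \<le> Pot ((Q, Qh, Vh, n), A, s) - Pot (xstep \<omega> ((Q, Qh, Vh, n), A, s))"
proof -
  define a where "a = sel Qh s"
  define j where "j = n s a"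
  define s' where "s' = \<omega> (s, a, j)"
  define qn where "qn = (1 - alpha (Suc j)) * Q s a + alpha (Suc j) * (r s a + gam * Vh s' + bb (Suc j))"
  define Qh' where "Qh' = Qh(s := (Qh s)(a := min (Qh s a) qn))"
  define Asa where "Asa = (1 - alpha (Suc j)) * A s a + alpha (Suc j) * gam * (Vh s' - Vs s')"
  define \<tau> where "\<tau> = Suc j"
  define \<alpha> where "\<alpha> = alpha \<tau>"
  define \<Delta> where "\<Delta> = Vh s' - Vs s'"
  define Q' where "Q' = Q(s := (Q s)(a := qn))"
  define Vh' where "Vh' = Vh(s := Max (range (Qh' s)))"
  define n' where "n' = n(s := (n s)(a := Suc j))"
  define A' where "A' = A(s := (A s)(a := Asa))"
  have xs: "xstep \<omega> ((Q, Qh, Vh, n), A, s) = ((Q', Qh', Vh', n'), A', s')"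
    unfolding Q'_def Vh'_def n'_def A'_def Qh'_def qn_def Asa_def s'_def j_def a_def by (rule xstep_eq)
  from inv have
    I1: "\<And>x y. Q x y = Qs x y + A x y + gam * M \<omega> x y (n x y) + beta (n x y)" and
    I2: "\<And>x y. Qh x y \<le> Q x y" and
    I3: "\<And>x y. Qs x y \<le> Qh x y" and
    I4: "\<And>x. Vh x = Max (range (Qh x))" and
    I5: "\<And>x y. 0 \<le> A x y" and
    I6: "\<And>x y. Qh x y \<le> H" and
    I7: "(\<Sum>z\<in>UNIV. real (n (fst z) (snd z))) = real t"
    unfolding Inv_def by auto
  have jt: "real j \<le> real t"
  proof -
    have "real (n (fst (s, a)) (snd (s, a))) \<le> (\<Sum>z\<in>UNIV. real (n (fst z) (snd z)))"
      by (rule member_le_sum) auto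
    then show ?thesis using I7 unfolding j_def by simp
  qed
  have \<tau>T: "\<tau> \<le> T" unfolding \<tau>_def using jt tT by simp
  have \<tau>1: "1 \<le> \<tau>" unfolding \<tau>_def by simp
  have Vh_ge: "Vs x \<le> Vh x" for x
  proof -
    have "Max (range (Qs x)) \<le> Max (range (Qh x))" by (rule Max_range_mono) (rule I3)
    then show ?thesis unfolding I4 using V_def by simp
  qed
  have Vh_le: "Vh x \<le> H" for x unfolding I4 by (rule Max_const_le) (rule I6)
  have \<Delta>0: "0 \<le> \<Delta>" unfolding \<Delta>_def using Vh_ge[of s'] by simp
  have a0: "0 \<le> \<alpha>" unfolding \<alpha>_def by (rule alpha_ge0)
  have a1: "\<alpha> \<le> 1" unfolding \<alpha>_def using \<tau>1 by (rule alpha_le1)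
  have g0: "0 \<le> gam" by (rule gam_ge0)
  have g1: "gam \<le> 1" by (rule gam_le1)
  have Msuc: "M \<omega> s a \<tau> = (1 - \<alpha>) * M \<omega> s a j + \<alpha> * (Vs s' - EV s a)"
    unfolding \<tau>_def \<alpha>_def s'_def by (rule M_Suc)
  have beta_suc: "beta \<tau> = (1 - \<alpha>) * beta j + \<alpha> * bb \<tau>"
    unfolding \<tau>_def \<alpha>_def by simp
  have qn_eq: "qn = Qs s a + Asa + gam * M \<omega> s a \<tau> + beta \<tau>"
  proof -
    have "qn = (1 - \<alpha>) * (Qs s a + A s a + gam * M \<omega> s a j + beta j)
             + \<alpha> * (Qs s a - gam * EV s a + gam * Vh s' + bb \<tau>)"
      unfolding qn_def \<alpha>_def \<tau>_def using I1[of s a] Qs_eq[of s a] j_def by simp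
    also have "\<dots> = Qs s a + Asa + gam * M \<omega> s a \<tau> + beta \<tau>"
      unfolding Msuc beta_suc Asa_def \<alpha>_def[symmetric] \<tau>_def[symmetric]
      by (simp add: algebra_simps)
    finally show ?thesis .
  qed
  have Asa0: "0 \<le> Asa"
    unfolding Asa_def \<alpha>_def[symmetric] \<tau>_def[symmetric] \<Delta>_def[symmetric]
    using I5[of s a] a0 a1 g0 \<Delta>0 by (simp add: add_nonneg_nonneg mult_nonneg_nonneg)
  have Mb: "\<bar>M \<omega> s a \<tau>\<bar> \<le> bb \<tau>" using good \<tau>1 \<tau>T unfolding good_def by blast
  have gMb: "\<bar>gam * M \<omega> s a \<tau>\<bar> \<le> bb \<tau>"
  proof -
    have "\<bar>gam * M \<omega> s a \<tau>\<bar> = gam * \<bar>M \<omega> s a \<tau>\<bar>" using g0 by (simp add: abs_mult)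
    also have "\<dots> \<le> \<bar>M \<omega> s a \<tau>\<bar>" by (rule mult_left_le_one_le) (use g0 g1 in auto)
    finally show ?thesis using Mb by simp
  qed
  have bt: "bb \<tau> \<le> beta \<tau>" using io \<tau>1 by (rule beta_ge)
  have qn_ge: "Qs s a \<le> qn" unfolding qn_eq using Asa0 gMb bt by linarith
  have J1: "\<forall>x y. Q' x y = Qs x y + A' x y + gam * M \<omega> x y (n' x y) + beta (n' x y)"
    unfolding Q'_def A'_def n'_def using I1 qn_eq \<tau>_def by auto
  have J2: "\<forall>x y. Qh' x y \<le> Q' x y" unfolding Qh'_def Q'_def using I2 by auto
  have J3: "\<forall>x y. Qs x y \<le> Qh' x y" unfolding Qh'_def using I3 qn_ge by auto
  have J4: "\<forall>x. Vh' x = Max (range (Qh' x))" unfolding Vh'_def using I4 by (auto simp: Qh'_def)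
  have J5: "\<forall>x y. 0 \<le> A' x y" unfolding A'_def using I5 Asa0 by auto
  have J6: "\<forall>x y. Qh' x y \<le> H" unfolding Qh'_def using I6 by (auto simp: min_le_iff_disj)
  have J7: "(\<Sum>z\<in>UNIV. real (n' (fst z) (snd z))) = real (Suc t)"
  proof -
    have "(\<Sum>z\<in>UNIV. real (n' (fst z) (snd z))) = (\<Sum>z\<in>UNIV. real (n (fst z) (snd z)))
          + (real (n' (fst (s,a)) (snd (s,a))) - real (n (fst (s,a)) (snd (s,a))))"
      by (rule sum_update_UNIV) (auto simp: n'_def)
    then show ?thesis using I7 by (simp add: n'_def j_def)
  qed
  have newinv: "Inv \<omega> (Suc t) ((Q', Qh', Vh', n'), A', s')"
    unfolding Inv_def using J1 J2 J3 J4 J5 J6 J7 by simp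
  have e1: "Vh s = Qh s a" unfolding I4 a_def using sel_greedy by simp
  have e2: "gam * M \<omega> s a j + beta j \<le> 3 * bb j"
  proof (cases "j = 0")
    case True then show ?thesis using M_0 bb_nonneg[OF io] by simp
  next
    case False
    have "\<bar>M \<omega> s a j\<bar> \<le> bb j" using good False jt tT unfolding good_def by auto
    have "gam * M \<omega> s a j \<le> \<bar>gam * M \<omega> s a j\<bar>" by simp
    also have "\<dots> = gam * \<bar>M \<omega> s a j\<bar>" using g0 by (simp add: abs_mult)
    also have "\<dots> \<le> \<bar>M \<omega> s a j\<bar>" by (rule mult_left_le_one_le) (use g0 g1 in auto)
    finally have "gam * M \<omega> s a j \<le> bb j" using \<open>\<bar>M \<omega> s a j\<bar> \<le> bb j\<close> by simp
    moreover have "beta j \<le> 2 * bb j" using io by (rule beta_le)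
    ultimately show ?thesis by simp
  qed
  have e3: "Qh s a \<le> Qs s a + A s a + 3 * bb j"
    using I2[of s a] I1[of s a] e2 j_def by simp
  have PhiD: "Phi (Q', Qh', Vh', n') A' = Phi (Q, Qh, Vh, n) A
       + ((H + real \<tau>) / H * Asa - (H + real j) / H * A s a)"
  proof -
    have "\<forall>z. z \<noteq> (s, a) \<longrightarrow> (H + real (n' (fst z) (snd z))) / H * A' (fst z) (snd z)
        = (H + real (n (fst z) (snd z))) / H * A (fst z) (snd z)"
      by (auto simp: n'_def A'_def)
    from sum_update_UNIV[OF this] show ?thesis by (simp add: Phi_def n'_def A'_def \<tau>_def j_def)
  qed
  have PhiC: "(H + real \<tau>) / H * Asa - (H + real j) / H * A s a = - A s a + (H + 1) / H * gam * \<Delta>"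
  proof -
    have Hp: "H > 0" by (rule H_pos)
    define D where "D = H + real \<tau>"
    have Dp: "D > 0" unfolding D_def using Hp by simp
    have "Asa = (real j / D) * A s a + ((H + 1) / D) * gam * \<Delta>"
      unfolding Asa_def \<Delta>_def D_def \<tau>_def using one_minus_alpha[of j] by (simp add: alpha_def)
    then have "D * Asa = real j * A s a + (H + 1) * gam * \<Delta>"
      using Dp by (simp add: distrib_left)
    then have "D / H * Asa = (real j * A s a + (H + 1) * gam * \<Delta>) / H" by simp
    then show ?thesis unfolding D_def[symmetric] using Hp by (simp add: field_simps)
  qed
  have Kg: "(H + 1) / H * gam * \<Delta> \<le> \<Delta>"
  proof -
    have "(H + 1) / H * gam = 1 - 1 / H\<^sup>2" unfolding gam_def using H_pos
      by (simp add: field_simps power2_eq_square)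
    also have "\<dots> \<le> 1" by simp
    finally have k: "(H + 1) / H * gam \<le> 1" .
    have "0 \<le> (H + 1) / H * gam" using H_pos gam_ge0 by simp
    from mult_left_le_one_le[OF \<Delta>0 this k] show ?thesis .
  qed
  have WD: "W (Q', Qh', Vh', n') = W (Q, Qh, Vh, n) + (Vh' s - Vh s)"
  proof -
    have "\<forall>x. x \<noteq> s \<longrightarrow> Vh' x = Vh x" by (simp add: Vh'_def)
    from sum_update_UNIV[OF this] show ?thesis by (simp add: W_def)
  qed
  have Vh's: "Vh' s \<le> Vh s"
  proof -
    have "Max (range (Qh' s)) \<le> Max (range (Qh s))"
      by (rule Max_range_mono) (auto simp: Qh'_def min_le_iff_disj)
    then show ?thesis unfolding Vh'_def I4 by simp
  qed
  have Vh's': "Vh s' - Vh' s' \<le> Vh s - Vh' s"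
    using Vh's unfolding Vh'_def by (cases "s' = s") auto
  have PsiD: "Psi (Q', Qh', Vh', n') = Psi (Q, Qh, Vh, n) + 3 * bb j"
  proof -
    have "\<forall>z. z \<noteq> (s, a) \<longrightarrow> Gs (n' (fst z) (snd z)) = Gs (n (fst z) (snd z))"
      by (auto simp: n'_def)
    from sum_update_UNIV[OF this] show ?thesis by (simp add: Psi_def n'_def j_def Gs_def)
  qed
  have P1: "Pot ((Q, Qh, Vh, n), A, s) = Phi (Q, Qh, Vh, n) A + W (Q, Qh, Vh, n) - Psi (Q, Qh, Vh, n) - (Vh s - Vs s)"
    by (simp add: Pot_def)
  have P2: "Pot ((Q', Qh', Vh', n'), A', s') = Phi (Q', Qh', Vh', n') A' + W (Q', Qh', Vh', n') - Psi (Q', Qh', Vh', n') - (Vh' s' - Vs s')"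
    by (simp add: Pot_def)
  have "Vs s - Qs s (sel Qh s) \<le> Pot ((Q, Qh, Vh, n), A, s) - Pot ((Q', Qh', Vh', n'), A', s')"
    unfolding P1 P2 a_def[symmetric] using PhiD PhiC Kg WD Vh's' PsiD e1 e3 \<Delta>_def by linarith
  then show ?thesis using newinv xs by simp
qed

end

context oqa begin

lemma step:
  assumes "good \<omega>" "iota \<ge> 0" "Inv \<omega> t X" "t < T"
  shows "Inv \<omega> (Suc t) (xstep \<omega> X) \<and>
         Vs (snd (snd X)) - Qs (snd (snd X)) (sel (Qhf (fst X)) (snd (snd X))) \<le> Pot X - Pot (xstep \<omega> X)"
proof -
  obtain Q Qh Vh n A s where X: "X = ((Q, Qh, Vh, n), A, s)" by (metis prod.collapse)
  show ?thesis using step_concrete[of \<omega> t Q Qh Vh n A s] assms unfolding X by simp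
qed

lemma Gs_le: assumes "iota \<ge> 0" shows "Gs N \<le> 6 * Cc * sqrt (real N)"
proof -
  have "Gs N = 3 * Cc * (\<Sum>j<N. 1 / sqrt (real j))"
    unfolding Gs_def bb_eq[OF assms] by (simp add: sum_distrib_left)
  also have "\<dots> \<le> 3 * Cc * (2 * sqrt (real N))"
    using Cc_nonneg[OF assms] sum_inv_sqrt[of N] by (intro mult_left_mono) auto
  finally show ?thesis by simp
qed

lemma sum_sqrt_le:
  fixes f :: "'z::finite \<Rightarrow> real"
  assumes "\<And>z. 0 \<le> f z"
  shows "(\<Sum>z\<in>UNIV. sqrt (f z)) \<le> sqrt (real CARD('z) * (\<Sum>z\<in>UNIV. f z))"
proof -
  have "(\<Sum>z\<in>UNIV. sqrt (f z))\<^sup>2 \<le> (\<Sum>z\<in>UNIV. (sqrt (f z))\<^sup>2) * real CARD('z)"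
    by (rule sum_squared_le_sum_of_squares)
  also have "(\<Sum>z\<in>UNIV. (sqrt (f z))\<^sup>2) = (\<Sum>z\<in>UNIV. f z)" using assms by simp
  finally show ?thesis by (intro real_le_rsqrt) (simp add: mult.commute)
qed

lemma Psi_le:
  fixes \<sigma> :: "('s, 'a) oq_state"
  assumes io: "iota \<ge> 0" and I7: "(\<Sum>z\<in>UNIV. real (nf \<sigma> (fst z) (snd z))) = real t"
  shows "Psi \<sigma> \<le> 6 * Cc * sqrt (real CARD('s \<times> 'a) * real t)"
proof -
  have "Psi \<sigma> \<le> (\<Sum>z\<in>UNIV. 6 * Cc * sqrt (real (nf \<sigma> (fst z) (snd z))))"
    unfolding Psi_def by (intro sum_mono Gs_le io)
  also have "\<dots> = 6 * Cc * (\<Sum>z\<in>UNIV. sqrt (real (nf \<sigma> (fst z) (snd z))))"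
    by (simp add: sum_distrib_left)
  also have "\<dots> \<le> 6 * Cc * sqrt (real CARD('s \<times> 'a) * real t)"
    using sum_sqrt_le[of "\<lambda>z. real (nf \<sigma> (fst z) (snd z))"] I7 Cc_nonneg[OF io]
    by (intro mult_left_mono) auto
  finally show ?thesis .
qed

lemma Pot_lower:
  assumes io: "iota \<ge> 0" and inv: "Inv \<omega> t X"
  shows "Pot X \<ge> - H - 6 * Cc * sqrt (real CARD('s \<times> 'a) * real t)"
proof -
  obtain Q Qh Vh n A s where X: "X = ((Q, Qh, Vh, n), A, s)" by (metis prod.collapse)
  from inv have
    I3: "\<And>x y. Qs x y \<le> Qh x y" and
    I4: "\<And>x. Vh x = Max (range (Qh x))" and
    I5: "\<And>x y. 0 \<le> A x y" and
    I6: "\<And>x y. Qh x y \<le> H" and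
    I7: "(\<Sum>z\<in>UNIV. real (n (fst z) (snd z))) = real t"
    unfolding Inv_def X by auto
  have Vh_ge: "Vs x \<le> Vh x" for x
  proof -
    have "Max (range (Qs x)) \<le> Max (range (Qh x))" by (rule Max_range_mono) (rule I3)
    then show ?thesis unfolding I4 using V_def by simp
  qed
  have Vh_le: "Vh x \<le> H" for x unfolding I4 by (rule Max_const_le) (rule I6)
  have "Phi (Q, Qh, Vh, n) A \<ge> 0"
    unfolding Phi_def using I5 H_pos by (intro sum_nonneg mult_nonneg_nonneg) auto
  moreover have "W (Q, Qh, Vh, n) \<ge> 0"
    unfolding W_def using Vh_ge Vs_ge0 by (intro sum_nonneg) (auto intro: order.trans)
  moreover have "Psi (Q, Qh, Vh, n) \<le> 6 * Cc * sqrt (real CARD('s \<times> 'a) * real t)"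
    using Psi_le[OF io] I7 by simp
  moreover have "Vh s - Vs s \<le> H" using Vh_le[of s] Vs_ge0[of s] by simp
  ultimately show ?thesis unfolding X Pot_def by simp
qed

lemma run_bound:
  assumes good: "good \<omega>" and io: "iota \<ge> 0"
  shows "Inv \<omega> t X \<Longrightarrow> t + k \<le> T \<Longrightarrow>
    (\<Sum>(s, a)\<leftarrow>drun k \<omega> X. Vs s - Qs s a) \<le> Pot X + H + 6 * Cc * sqrt (real CARD('s \<times> 'a) * real (t + k))"
proof (induction k arbitrary: t X)
  case 0
  then show ?case using Pot_lower[OF io, of \<omega> t X] by simp
next
  case (Suc k)
  have tT: "t < T" using Suc.prems by simp
  note st = step[OF good io Suc.prems(1) tT]
  have IH: "(\<Sum>(s, a)\<leftarrow>drun k \<omega> (xstep \<omega> X). Vs s - Qs s a)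
      \<le> Pot (xstep \<omega> X) + H + 6 * Cc * sqrt (real CARD('s \<times> 'a) * real (Suc t + k))"
    using Suc.IH[of "Suc t" "xstep \<omega> X"] st Suc.prems by simp
  show ?case using st IH by simp
qed

definition "A0 = (\<lambda>x y. H - Qs x y)"

lemma Inv_init: "Inv \<omega> 0 (oq_init H, A0, s1)"
  unfolding Inv_def oq_init_def A0_def using Qs_le_H by (simp add: M_0)

lemma Pot_init: "Pot (oq_init H, A0, s1) \<le> real CARD('s \<times> 'a) * H + real CARD('s) * H"
proof -
  have "Phi (oq_init H) A0 \<le> real CARD('s \<times> 'a) * H"
  proof -
    have "Phi (oq_init H) A0 = (\<Sum>z\<in>UNIV. H - Qs (fst z) (snd z))"
      unfolding Phi_def oq_init_def A0_def using H_pos by simp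
    also have "\<dots> \<le> (\<Sum>z\<in>(UNIV :: ('s \<times> 'a) set). H)"
      using Qs_ge0 by (intro sum_mono) auto
    finally show ?thesis by simp
  qed
  moreover have "W (oq_init H :: ('s, 'a) oq_state) = real CARD('s) * H" unfolding W_def oq_init_def by simp
  moreover have "Psi (oq_init H :: ('s, 'a) oq_state) = 0" unfolding Psi_def oq_init_def Gs_def by simp
  moreover have "0 \<le> H - Vs s1" using Vs_le_H[of s1] by simp
  ultimately show ?thesis unfolding Pot_def oq_init_def by simp
qed

end

context oqa begin

lemma Omega_component: "j \<in> Idx \<Longrightarrow> map_pmf (\<lambda>f. f j) Omega = p (fst j) (fst (snd j))"
  unfolding Omega_def by (subst Pi_pmf_component[OF finite_Idx]) (auto simp: case_prod_unfold)

lemma bad_prob: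
  assumes t1: "1 \<le> \<tau>" and tT: "\<tau> \<le> T" and io: "iota \<ge> 0"
  shows "measure_pmf.prob Omega {\<omega>. bb \<tau> < \<bar>M \<omega> x y \<tau>\<bar>} \<le> 2 * exp (- 4 * iota)"
proof -
  define spV where "spV = Max (range Vs) - Min (range Vs)"
  have spV0: "0 \<le> spV" unfolding spV_def by (rule span_Vs_ge0)
  show ?thesis
  proof (cases "spV = 0")
    case True
    have "Vs z - EV x y = 0" for z
      using Vs_le_max[of z] Vs_ge_min[of z] EV_le[of x y] EV_ge[of x y] True unfolding spV_def by linarith
    then have "M \<omega> x y \<tau> = 0" for \<omega> unfolding M_def by simp
    then have "{\<omega>. bb \<tau> < \<bar>M \<omega> x y \<tau>\<bar>} = {}" using bb_nonneg[OF io, of \<tau>] by (simp add: not_less)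
    then show ?thesis by simp
  next
    case False
    then have spVp: "0 < spV" using spV0 by simp
    define J where "J = (\<lambda>i. (x, y, i)) ` {..<\<tau>}"
    define Xv where "Xv j \<omega> = wt \<tau> (snd (snd j)) * (Vs (\<omega> j) - EV x y)" for j and \<omega> :: "'s \<times> 'a \<times> nat \<Rightarrow> 's"
    define lo where "lo j = wt \<tau> (snd (snd j)) * (Min (range Vs) - EV x y)" for j :: "'s \<times> 'a \<times> nat"
    define hi where "hi j = wt \<tau> (snd (snd j)) * (Max (range Vs) - EV x y)" for j :: "'s \<times> 'a \<times> nat"
    have finJ: "finite J" unfolding J_def by simp
    have JI: "J \<subseteq> Idx" unfolding J_def Idx_def using tT by auto
    have inj: "inj_on (\<lambda>i. (x, y, i)) {..<\<tau>}" by (auto simp: inj_on_def)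
    have Msum: "M \<omega> x y \<tau> = (\<Sum>j\<in>J. Xv j \<omega>)" for \<omega>
      unfolding M_def J_def Xv_def by (simp add: sum.reindex[OF inj])
    have indep: "prob_space.indep_vars (measure_pmf Omega) (\<lambda>_. borel) Xv J"
    proof -
      have "prob_space.indep_vars (measure_pmf Omega) (\<lambda>_. count_space UNIV) (\<lambda>j f. f j) Idx"
        unfolding Omega_def by (rule indep_vars_Pi_pmf[OF finite_Idx])
      then have "prob_space.indep_vars (measure_pmf Omega) (\<lambda>_. count_space UNIV) (\<lambda>j f. f j) J"
        using JI by (rule prob_space.indep_vars_subset[OF measure_pmf.prob_space_axioms])
      then have "prob_space.indep_vars (measure_pmf Omega) (\<lambda>_. borel)
          (\<lambda>j f. (\<lambda>j v. wt \<tau> (snd (snd j)) * (Vs v - EV x y)) j ((\<lambda>j f. f j) j f)) J"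
        by (rule prob_space.indep_vars_compose2[OF measure_pmf.prob_space_axioms]) simp
      then show ?thesis unfolding Xv_def by simp
    qed
    have expX: "measure_pmf.expectation Omega (Xv j) = 0" if "j \<in> J" for j
    proof -
      have jI: "j \<in> Idx" using that JI by auto
      have pj: "p (fst j) (fst (snd j)) = p x y" using that unfolding J_def by auto
      have "measure_pmf.expectation Omega (Xv j)
          = measure_pmf.expectation (map_pmf (\<lambda>f. f j) Omega) (\<lambda>v. wt \<tau> (snd (snd j)) * (Vs v - EV x y))"
        unfolding Xv_def by simp
      also have "\<dots> = measure_pmf.expectation (p x y) (\<lambda>v. wt \<tau> (snd (snd j)) * (Vs v - EV x y))"
        using Omega_component[OF jI] pj by simp
      also have "\<dots> = wt \<tau> (snd (snd j)) * (measure_pmf.expectation (p x y) Vs - EV x y)"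
        by (simp add: integrable_measure_pmf_finite prob_space.prob_space measure_pmf.prob_space_axioms)
      also have "\<dots> = 0" unfolding EV_def by simp
      finally show ?thesis .
    qed
    interpret Hf: Hoeffding_ineq "measure_pmf Omega" J Xv lo hi 0
    proof unfold_locales
      show "finite J" by (rule finJ)
      show "prob_space.indep_vars (measure_pmf Omega) (\<lambda>_. borel) Xv J" by (rule indep)
      show "AE \<omega> in measure_pmf Omega. Xv i \<omega> \<in> {lo i..hi i}" if "i \<in> J" for i
      proof (rule AE_I2)
        fix \<omega> :: "'s \<times> 'a \<times> nat \<Rightarrow> 's"
        have w0: "0 \<le> wt \<tau> (snd (snd i))" by (rule wt_nonneg)
        have "Min (range Vs) - EV x y \<le> Vs (\<omega> i) - EV x y" using Vs_ge_min by simp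
        then have "lo i \<le> Xv i \<omega>" unfolding lo_def Xv_def using w0 by (rule mult_left_mono)
        moreover have "Vs (\<omega> i) - EV x y \<le> Max (range Vs) - EV x y" using Vs_le_max by simp
        then have "Xv i \<omega> \<le> hi i" unfolding hi_def Xv_def using w0 by (rule mult_left_mono)
        ultimately show "Xv i \<omega> \<in> {lo i..hi i}" by simp
      qed
      show "0 \<equiv> \<Sum>i\<in>J. measure_pmf.expectation Omega (Xv i)" using expX by simp
    qed
    have ssq: "(\<Sum>i\<in>J. (hi i - lo i)\<^sup>2) = spV\<^sup>2 * (\<Sum>i<\<tau>. (wt \<tau> i)\<^sup>2)"
    proof -
      have "(\<Sum>i\<in>J. (hi i - lo i)\<^sup>2) = (\<Sum>i<\<tau>. (wt \<tau> i * spV)\<^sup>2)"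
        unfolding J_def hi_def lo_def spV_def by (simp add: sum.reindex[OF inj] algebra_simps)
      also have "\<dots> = spV\<^sup>2 * (\<Sum>i<\<tau>. (wt \<tau> i)\<^sup>2)"
        by (simp add: sum_distrib_left power_mult_distrib mult.commute)
      finally show ?thesis .
    qed
    have wpos: "0 < (\<Sum>i<\<tau>. (wt \<tau> i)\<^sup>2)"
    proof -
      obtain k where k: "\<tau> = Suc k" using t1 by (cases \<tau>) auto
      have "wt \<tau> k = alpha \<tau>" unfolding k by simp
      moreover have "alpha \<tau> > 0" unfolding alpha_def using H_pos by simp
      ultimately have "0 < (wt \<tau> k)\<^sup>2" by simp
      also have "\<dots> \<le> (\<Sum>i<\<tau>. (wt \<tau> i)\<^sup>2)" by (rule member_le_sum) (auto simp: k)
      finally show ?thesis .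
    qed
    have S_pos: "(\<Sum>i\<in>J. (hi i - lo i)\<^sup>2) > 0" unfolding ssq using spVp wpos by simp
    have S_le: "(\<Sum>i\<in>J. (hi i - lo i)\<^sup>2) \<le> 4 * sp\<^sup>2 * (2 * H / real \<tau>)"
    proof -
      have "spV\<^sup>2 \<le> (2 * sp)\<^sup>2" using spV0 span_Vs unfolding spV_def[symmetric] by (intro power_mono) auto
      then have "spV\<^sup>2 \<le> 4 * sp\<^sup>2" by (simp add: power_mult_distrib)
      moreover have "(\<Sum>i<\<tau>. (wt \<tau> i)\<^sup>2) \<le> 2 * H / real \<tau>" using t1 by (rule wt_sq)
      ultimately show ?thesis unfolding ssq using wpos
        by (intro mult_mono) auto
    qed
    have bb2: "(bb \<tau>)\<^sup>2 = 16 * sp\<^sup>2 * (H / real \<tau> * iota)"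
    proof -
      have "0 \<le> H / real \<tau> * iota" using H_pos io by simp
      then show ?thesis unfolding bb_def by (simp add: power_mult_distrib)
    qed
    have expo: "exp (- 2 * (bb \<tau>)\<^sup>2 / (\<Sum>i\<in>J. (hi i - lo i)\<^sup>2)) \<le> exp (- 4 * iota)"
    proof -
      have "4 * iota * (\<Sum>i\<in>J. (hi i - lo i)\<^sup>2) \<le> 4 * iota * (4 * sp\<^sup>2 * (2 * H / real \<tau>))"
        using S_le io by (intro mult_left_mono) auto
      also have "\<dots> = 2 * (bb \<tau>)\<^sup>2" unfolding bb2 by (simp add: field_simps)
      finally have "4 * iota \<le> 2 * (bb \<tau>)\<^sup>2 / (\<Sum>i\<in>J. (hi i - lo i)\<^sup>2)"
        using S_pos by (simp add: field_simps)
      then show ?thesis by simp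
    qed
    have "measure_pmf.prob Omega {\<omega>. bb \<tau> < \<bar>M \<omega> x y \<tau>\<bar>}
        \<le> measure_pmf.prob Omega {\<omega> \<in> space (measure_pmf Omega). \<bar>(\<Sum>i\<in>J. Xv i \<omega>) - 0\<bar> \<ge> bb \<tau>}"
      by (rule measure_pmf.finite_measure_mono) (auto simp: Msum)
    also have "\<dots> \<le> 2 * exp (- 2 * (bb \<tau>)\<^sup>2 / (\<Sum>i\<in>J. (hi i - lo i)\<^sup>2))"
      by (rule Hf.Hoeffding_ineq_abs_ge) (use bb_nonneg[OF io] S_pos in auto)
    also have "\<dots> \<le> 2 * exp (- 4 * iota)" using expo by simp
    finally show ?thesis .
  qed
qed

end

context oqa begin


lemma card_sa: "real CARD('s \<times> 'a) = (real CARD('s) * real CARD('a))" by simp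

lemma det_bound:
  assumes good: "good \<omega>" and io: "iota \<ge> 0"
  shows "(\<Sum>(s, a)\<leftarrow>drun T \<omega> (oq_init H, A0, s1). Vs s - Qs s a)
         \<le> 4 * H * real CARD('s) * real CARD('a) + 24 * sp * sqrt (H * real CARD('s) * real CARD('a) * real T * iota)"
proof -
  have "(\<Sum>(s, a)\<leftarrow>drun T \<omega> (oq_init H, A0, s1). Vs s - Qs s a)
      \<le> Pot (oq_init H, A0, s1) + H + 6 * Cc * sqrt (real CARD('s \<times> 'a) * real (0 + T))"
    by (rule run_bound[OF good io Inv_init]) simp
  also have "\<dots> \<le> (real CARD('s) * real CARD('a)) * H + real CARD('s) * H + H + 6 * Cc * sqrt ((real CARD('s) * real CARD('a)) * real T)"
    using Pot_init[of s1] by simp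
  also have "(real CARD('s) * real CARD('a)) * H + real CARD('s) * H + H \<le> 4 * H * real CARD('s) * real CARD('a)"
  proof -
    have s1: "1 \<le> real CARD('s)" and a1: "1 \<le> real CARD('a)" by (simp_all add: Suc_leI)
    have "1 * 1 \<le> real CARD('s) * real CARD('a)" using s1 a1 by (intro mult_mono) auto
    then have h1: "H \<le> (real CARD('s) * real CARD('a)) * H" using H_pos by simp
    have "real CARD('s) * 1 \<le> real CARD('s) * real CARD('a)" using a1 by (intro mult_left_mono) auto
    then have h2: "real CARD('s) * H \<le> (real CARD('s) * real CARD('a)) * H" using H_pos by (intro mult_right_mono) auto
    have e: "4 * H * real CARD('s) * real CARD('a) = 4 * ((real CARD('s) * real CARD('a)) * H)" by (simp add: ac_simps)
    have aux: "\<And>P X Y :: real. 0 \<le> Y \<Longrightarrow> Y \<le> P \<Longrightarrow> X \<le> P \<Longrightarrow> P + X + Y \<le> 4 * P" by linarith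
    show ?thesis unfolding e by (rule aux[OF _ h1 h2]) (use H_pos in simp)
  qed
  also have "6 * Cc * sqrt ((real CARD('s) * real CARD('a)) * real T) = 24 * sp * sqrt (H * real CARD('s) * real CARD('a) * real T * iota)"
  proof -
    have "sqrt (H * iota) * sqrt ((real CARD('s) * real CARD('a)) * real T) = sqrt (H * real CARD('s) * real CARD('a) * real T * iota)"
      by (simp add: real_sqrt_mult[symmetric] ac_simps)
    then show ?thesis unfolding Cc_def by (simp add: ac_simps)
  qed
  finally show ?thesis by simp
qed

lemma trivial_sum: "(\<Sum>(s, a)\<leftarrow>drun k \<omega> X. Vs s - Qs s a) \<le> real k * (1 + 2 * sp)"
proof (induction k arbitrary: X)
  case 0 then show ?case by simp
next
  case (Suc k)
  have "Vs (snd (snd X)) - Qs (snd (snd X)) (sel (Qhf (fst X)) (snd (snd X))) \<le> 1 + 2 * sp" by (rule gap_le)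
  then show ?case using Suc.IH[of "xstep \<omega> X"] by (simp add: algebra_simps)
qed

lemma prob_good:
  assumes T1: "1 \<le> T" and small: "(real CARD('s) * real CARD('a)) \<le> 8 * real T ^ 3"
  shows "measure_pmf.prob Omega {\<omega>. good \<omega>} \<ge> 1 - \<delta>"
proof -
  have dp: "0 < \<delta>" and d1: "\<delta> < 1" using \<delta>_range by auto
  have pos: "0 < 2 * real T / \<delta>" using T1 dp by simp
  have io: "iota \<ge> 0" unfolding iota_def using T1 dp d1 by (simp add: field_simps)
  define I where "I = (UNIV :: 's set) \<times> (UNIV :: 'a set) \<times> {1..T}"
  define Bd where "Bd z = {\<omega>. bb (snd (snd z)) < \<bar>M \<omega> (fst z) (fst (snd z)) (snd (snd z))\<bar>}" for z :: "'s \<times> 'a \<times> nat"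
  have sub: "{\<omega>. \<not> good \<omega>} \<subseteq> (\<Union>z\<in>I. Bd z)"
  proof
    fix \<omega> assume "\<omega> \<in> {\<omega>. \<not> good \<omega>}"
    then obtain x y \<tau> where "1 \<le> \<tau>" "\<tau> \<le> T" "\<not> \<bar>M \<omega> x y \<tau>\<bar> \<le> bb \<tau>" unfolding good_def by auto
    then show "\<omega> \<in> (\<Union>z\<in>I. Bd z)" unfolding I_def Bd_def
      by (intro UN_I[of "(x, y, \<tau>)"]) auto
  qed
  have "measure_pmf.prob Omega {\<omega>. \<not> good \<omega>} \<le> measure_pmf.prob Omega (\<Union>z\<in>I. Bd z)"
    using sub by (rule measure_pmf.finite_measure_mono) simp
  also have "\<dots> \<le> (\<Sum>z\<in>I. measure_pmf.prob Omega (Bd z))"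
    by (rule measure_pmf.finite_measure_subadditive_finite) (auto simp: I_def)
  also have "\<dots> \<le> (\<Sum>z\<in>I. 2 * exp (- 4 * iota))"
  proof (rule sum_mono)
    fix z assume "z \<in> I"
    then have "1 \<le> snd (snd z)" "snd (snd z) \<le> T" unfolding I_def by auto
    from bad_prob[OF this io] show "measure_pmf.prob Omega (Bd z) \<le> 2 * exp (- 4 * iota)"
      unfolding Bd_def .
  qed
  also have "\<dots> = (real CARD('s) * real CARD('a)) * real T * (2 * exp (- 4 * iota))"
    unfolding I_def by (simp add: card_cartesian_product)
  also have "exp (- 4 * iota) = \<delta> ^ 4 / (16 * real T ^ 4)"
  proof -
    have "exp (4 * iota) = exp iota ^ 4" using exp_of_nat_mult[of 4 iota] by simp
    also have "exp iota = 2 * real T / \<delta>" unfolding iota_def using pos by simp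
    finally have "exp (4 * iota) = (2 * real T / \<delta>) ^ 4" .
    then have "exp (- 4 * iota) = inverse ((2 * real T / \<delta>) ^ 4)" using exp_minus[of "4 * iota"] by simp
    also have "\<dots> = \<delta> ^ 4 / (2 * real T) ^ 4" by (simp add: power_divide)
    also have "(2 * real T) ^ 4 = 16 * real T ^ 4" by (simp add: power_mult_distrib)
    finally show ?thesis .
  qed
  also have "(real CARD('s) * real CARD('a)) * real T * (2 * (\<delta> ^ 4 / (16 * real T ^ 4))) \<le> 8 * real T ^ 3 * real T * (2 * (\<delta> ^ 4 / (16 * real T ^ 4)))"
    using small dp by (intro mult_right_mono) auto
  also have "\<dots> = \<delta> ^ 4" using T1 by (simp add: field_simps power_numeral_reduce)
  also have "\<dots> \<le> \<delta>" using dp d1 power_decreasing[of 1 4 \<delta>] by simp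
  finally have "measure_pmf.prob Omega {\<omega>. \<not> good \<omega>} \<le> \<delta>" .
  moreover have "measure_pmf.prob Omega {\<omega>. good \<omega>} = 1 - measure_pmf.prob Omega {\<omega>. \<not> good \<omega>}"
  proof -
    have "UNIV - {\<omega>. \<not> good \<omega>} = {\<omega>. good \<omega>}" by auto
    then show ?thesis using measure_pmf.prob_compl[of "{\<omega>. \<not> good \<omega>}" Omega] by simp
  qed
  ultimately show ?thesis by simp
qed

end

lemma exp_le': fixes f :: "'s::finite \<Rightarrow> real" assumes "\<forall>x. f x \<le> c"
  shows "measure_pmf.expectation P f \<le> c"
  by (rule measure_pmf.integral_le_const) (use assms in \<open>auto simp: integrable_measure_pmf_finite\<close>)
lemma exp_ge': fixes f :: "'s::finite \<Rightarrow> real" assumes "\<forall>x. c \<le> f x"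
  shows "c \<le> measure_pmf.expectation P f"
  by (rule measure_pmf.integral_ge_const) (use assms in \<open>auto simp: integrable_measure_pmf_finite\<close>)

lemma span_bound:
  fixes r :: "'s::finite \<Rightarrow> 'a::finite \<Rightarrow> real"
    and p :: "'s \<Rightarrow> 'a \<Rightarrow> 's pmf"
    and J :: real and q :: "'s \<Rightarrow> 'a \<Rightarrow> real"
    and Qs :: "'s \<Rightarrow> 'a \<Rightarrow> real" and Vs :: "'s \<Rightarrow> real" and H :: real
  assumes avg_bellman: "\<forall>s a. J + q s a =
          r s a + measure_pmf.expectation (p s a) (\<lambda>s'. Max (range (q s')))"
    and H_ge: "H \<ge> 2"
    and disc_bellman: "\<forall>s a. Qs s a =
          r s a + (1 - 1 / H) * measure_pmf.expectation (p s a) Vs"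
    and V_def: "\<forall>s. Vs s = Max (range (Qs s))"
  shows "Max (range Vs) - Min (range Vs) \<le> 2 * span (\<lambda>s. Max (range (q s)))"
proof -
  define h where "h s = Max (range (q s))" for s
  define g where "g = 1 - 1 / H"
  define e where "e s = Vs s - h s - J * H" for s
  define hM where "hM = Max (range h)"
  define hm where "hm = Min (range h)"
  define eM where "eM = Max (range e)"
  define em where "em = Min (range e)"
  have Hp: "H > 0" using H_ge by simp
  have g0: "0 \<le> g" unfolding g_def using H_ge by (simp add: field_simps)
  have hM: "h s \<le> hM" for s unfolding hM_def by (simp add: Max_ge)
  have hm: "hm \<le> h s" for s unfolding hm_def by (simp add: Min_le)
  have eM: "e s \<le> eM" for s unfolding eM_def by (simp add: Max_ge)
  have em: "em \<le> e s" for s unfolding em_def by (simp add: Min_le)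
  have Vs_eq: "Vs = (\<lambda>s. h s + e s + J * H)" unfolding e_def by auto
  have EV: "measure_pmf.expectation (p s a) Vs
      = measure_pmf.expectation (p s a) h + measure_pmf.expectation (p s a) e + J * H" for s a
    unfolding Vs_eq by (simp add: integrable_measure_pmf_finite prob_space.prob_space measure_pmf.prob_space_axioms)
  have key: "Qs s a = q s a - measure_pmf.expectation (p s a) h / H + g * measure_pmf.expectation (p s a) e + J * H" for s a
  proof -
    have r: "r s a = J + q s a - measure_pmf.expectation (p s a) h"
      using avg_bellman unfolding h_def by (metis add_diff_cancel_right')
    have "Qs s a = r s a + g * measure_pmf.expectation (p s a) Vs"
      using disc_bellman unfolding g_def by simp
    also have "\<dots> = J + q s a - measure_pmf.expectation (p s a) h
        + g * (measure_pmf.expectation (p s a) h + measure_pmf.expectation (p s a) e + J * H)"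
      unfolding r EV ..
    also have "\<dots> = q s a - measure_pmf.expectation (p s a) h / H + g * measure_pmf.expectation (p s a) e + J * H"
      unfolding g_def using Hp by (simp add: field_simps)
    finally show ?thesis .
  qed
  have attainQ: "\<exists>a. Vs s = Qs s a" for s
  proof -
    have "Max (range (Qs s)) \<in> range (Qs s)" by (rule Max_in) auto
    then show ?thesis using V_def by (metis rangeE)
  qed
  have attainq: "\<exists>a. h s = q s a" for s
  proof -
    have "Max (range (q s)) \<in> range (q s)" by (rule Max_in) auto
    then show ?thesis unfolding h_def by (metis rangeE)
  qed
  have QleV: "Qs s a \<le> Vs s" for s a using V_def by (simp add: Max_ge)
  have qleh: "q s a \<le> h s" for s a unfolding h_def by (simp add: Max_ge)
  have up: "e s \<le> - hm / H + g * eM" for s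
  proof -
    obtain a where a: "Vs s = Qs s a" using attainQ by blast
    have E1: "hm \<le> measure_pmf.expectation (p s a) h" by (rule exp_ge') (simp add: hm)
    have E2: "measure_pmf.expectation (p s a) e \<le> eM" by (rule exp_le') (simp add: eM)
    have "hm / H \<le> measure_pmf.expectation (p s a) h / H" using E1 Hp by (simp add: divide_right_mono)
    moreover have "g * measure_pmf.expectation (p s a) e \<le> g * eM" using E2 g0 by (rule mult_left_mono)
    ultimately show ?thesis using a key[of s a] qleh[of s a] unfolding e_def by linarith
  qed
  have lo: "- hM / H + g * em \<le> e s" for s
  proof -
    obtain a where a: "h s = q s a" using attainq by blast
    have E1: "measure_pmf.expectation (p s a) h \<le> hM" by (rule exp_le') (simp add: hM)
    have E2: "em \<le> measure_pmf.expectation (p s a) e" by (rule exp_ge') (simp add: em)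
    have "measure_pmf.expectation (p s a) h / H \<le> hM / H" using E1 Hp by (simp add: divide_right_mono)
    moreover have "g * em \<le> g * measure_pmf.expectation (p s a) e" using E2 g0 by (rule mult_left_mono)
    ultimately show ?thesis using a key[of s a] QleV[of s a] unfolding e_def by linarith
  qed
  have eM_le: "eM \<le> - hm"
  proof -
    have "eM \<in> range e" unfolding eM_def by (rule Max_in) auto
    then obtain s where "e s = eM" by (metis rangeE)
    then have "eM \<le> - hm / H + g * eM" using up[of s] by simp
    moreover have "eM - g * eM = eM / H" unfolding g_def by (simp add: algebra_simps)
    ultimately have "eM / H \<le> - hm / H" by linarith
    then show ?thesis using Hp by (subst (asm) divide_le_cancel) simp
  qed
  have em_ge: "- hM \<le> em"
  proof -
    have "em \<in> range e" unfolding em_def by (rule Min_in) auto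
    then obtain s where "e s = em" by (metis rangeE)
    then have "- hM / H + g * em \<le> em" using lo[of s] by simp
    moreover have "em - g * em = em / H" unfolding g_def by (simp add: algebra_simps)
    ultimately have "- hM / H \<le> em / H" by linarith
    then show ?thesis using Hp by (subst (asm) divide_le_cancel) simp
  qed
  have mx: "Max (range Vs) \<le> hM + eM + J * H"
    using hM eM by (simp add: Vs_eq add_mono)
  have mn: "hm + em + J * H \<le> Min (range Vs)"
    using hm em by (simp add: Vs_eq add_mono)
  have sp: "span (\<lambda>s. Max (range (q s))) = hM - hm"
    unfolding span_def hM_def hm_def h_def ..
  have "Max (range Vs) - Min (range Vs) \<le> (hM + eM + J * H) - (hm + em + J * H)"
    using mx mn by (rule diff_mono)
  also have "\<dots> \<le> 2 * (hM - hm)" using eM_le em_ge by simp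
  finally show ?thesis unfolding sp .
qed

context oqa begin

lemma triv_le:
  assumes big: "\<not> (real CARD('s) * real CARD('a) \<le> 8 * real T ^ 3)"
  shows "real T * (1 + 2 * sp) \<le> 4 * H * real CARD('s) * real CARD('a)
           + 24 * sp * sqrt (H * real CARD('s) * real CARD('a) * real T * ln (2 * real T / \<delta>))"
proof (cases "T = 0")
  case True
  then show ?thesis using H_pos by simp
next
  case False
  then have T1: "1 \<le> real T" by simp
  have dp: "0 < \<delta>" and d1: "\<delta> < 1" using \<delta>_range by auto
  define SA where "SA = real CARD('s) * real CARD('a)"
  have "real T ^ 1 \<le> real T ^ 3" using T1 by (intro power_increasing) auto
  then have p1: "real T \<le> real T ^ 3" by (simp only: power_one_right)
  have p0: "0 \<le> real T ^ 3" by simp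
  have TS: "real T \<le> SA" using big p1 p0 unfolding SA_def by linarith
  have "2 \<le> 2 * real T / \<delta>" using T1 dp d1 by (simp add: field_simps)
  then have "ln 2 \<le> ln (2 * real T / \<delta>)" by simp
  then have io: "2/3 \<le> ln (2 * real T / \<delta>)" using ln2_ge_two_thirds by linarith
  define \<iota> where "\<iota> = ln (2 * real T / \<delta>)"
  have Hi: "1 \<le> H * \<iota>"
  proof -
    have "2 * (2/3) \<le> H * \<iota>" using H_ge io unfolding \<iota>_def by (intro mult_mono) auto
    then show ?thesis by simp
  qed
  have "real T * real T \<le> (H * \<iota>) * SA * real T"
  proof -
    have "1 * real T \<le> (H * \<iota>) * SA" using Hi TS T1 by (intro mult_mono) auto
    then show ?thesis using T1 by (intro mult_right_mono) auto
  qed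
  then have "(real T)\<^sup>2 \<le> H * SA * real T * \<iota>" by (simp add: power2_eq_square ac_simps)
  then have sq: "real T \<le> sqrt (H * SA * real T * \<iota>)" by (rule real_le_rsqrt)
  have "2 * sp * real T \<le> 24 * sp * sqrt (H * SA * real T * \<iota>)"
  proof -
    have "2 * real T \<le> 24 * sqrt (H * SA * real T * \<iota>)" using sq T1 by simp
    then have "sp * (2 * real T) \<le> sp * (24 * sqrt (H * SA * real T * \<iota>))"
      using sp_nonneg by (rule mult_left_mono)
    then show ?thesis by (simp add: ac_simps)
  qed
  moreover have "real T \<le> 4 * H * SA"
  proof -
    have "1 * SA \<le> (4 * H) * SA" using H_ge TS T1 by (intro mult_right_mono) auto
    then show ?thesis using TS by simp
  qed
  ultimately show ?thesis unfolding SA_def \<iota>_def by (simp add: algebra_simps)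
qed

theorem main_loc:
  "measure_pmf.prob (oq_run r p H \<delta> T sp sel T (oq_init H) s1)
     {xs. (\<Sum>(s, a)\<leftarrow>xs. Vs s - Qs s a)
            \<le> 4 * H * real CARD('s) * real CARD('a)
              + 24 * sp * sqrt (H * real CARD('s) * real CARD('a) * real T * ln (2 * real T / \<delta>))}
   \<ge> 1 - \<delta>"
proof -
  define G where "G = {xs. (\<Sum>(s, a)\<leftarrow>xs. Vs s - Qs s a)
            \<le> 4 * H * real CARD('s) * real CARD('a)
              + 24 * sp * sqrt (H * real CARD('s) * real CARD('a) * real T * ln (2 * real T / \<delta>))}"
  have cp: "map_pmf (\<lambda>\<omega>. drun T \<omega> (oq_init H, A0, s1)) Omega = oq_run r p H \<delta> T sp sel T (oq_init H) s1"
    by (rule coupling) (simp add: oq_init_def)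
  have P: "measure_pmf.prob (oq_run r p H \<delta> T sp sel T (oq_init H) s1) G
      = measure_pmf.prob Omega {\<omega>. drun T \<omega> (oq_init H, A0, s1) \<in> G}"
    unfolding cp[symmetric] measure_map_pmf by (simp add: vimage_def)
  have dp: "0 < \<delta>" and d1: "\<delta> < 1" using \<delta>_range by auto
  show ?thesis unfolding G_def[symmetric] P
  proof (cases "real CARD('s) * real CARD('a) \<le> 8 * real T ^ 3")
    case True
    have T1: "1 \<le> T"
    proof (rule ccontr)
      assume "\<not> 1 \<le> T"
      then have "T = 0" by simp
      moreover have "1 \<le> real CARD('s) * real CARD('a)"
      proof -
        have s1: "1 \<le> real CARD('s)" and a1: "1 \<le> real CARD('a)" by (simp_all add: Suc_leI)
        have "1 * 1 \<le> real CARD('s) * real CARD('a)" using s1 a1 by (intro mult_mono) auto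
        then show ?thesis by simp
      qed
      ultimately show False using True by simp
    qed
    have io: "iota \<ge> 0" unfolding iota_def using T1 dp d1 by (simp add: field_simps)
    have "{\<omega>. good \<omega>} \<subseteq> {\<omega>. drun T \<omega> (oq_init H, A0, s1) \<in> G}"
      using det_bound[OF _ io] unfolding G_def iota_def by auto
    then have "measure_pmf.prob Omega {\<omega>. good \<omega>} \<le> measure_pmf.prob Omega {\<omega>. drun T \<omega> (oq_init H, A0, s1) \<in> G}"
      by (rule measure_pmf.finite_measure_mono) simp
    moreover have "measure_pmf.prob Omega {\<omega>. good \<omega>} \<ge> 1 - \<delta>" using prob_good T1 True by simp
    ultimately show "1 - \<delta> \<le> measure_pmf.prob Omega {\<omega>. drun T \<omega> (oq_init H, A0, s1) \<in> G}" by simp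
  next
    case False
    have "{\<omega>. drun T \<omega> (oq_init H, A0, s1) \<in> G} = UNIV"
    proof -
      have "drun T \<omega> (oq_init H, A0, s1) \<in> G" for \<omega>
        using order.trans[OF trivial_sum triv_le[OF False]] unfolding G_def by simp
      then show ?thesis by auto
    qed
    then show "1 - \<delta> \<le> measure_pmf.prob Omega {\<omega>. drun T \<omega> (oq_init H, A0, s1) \<in> G}"
      using dp by simp
  qed
qed

end

theorem lemma2:
  fixes r :: "'s::finite \<Rightarrow> 'a::finite \<Rightarrow> real"
    and p :: "'s \<Rightarrow> 'a \<Rightarrow> 's pmf"
    and J :: real and q :: "'s \<Rightarrow> 'a \<Rightarrow> real"
    and Qs :: "'s \<Rightarrow> 'a \<Rightarrow> real" and Vs :: "'s \<Rightarrow> real"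
    and H \<delta> :: real and T :: nat
    and sel :: "('s \<Rightarrow> 'a \<Rightarrow> real) \<Rightarrow> 's \<Rightarrow> 'a"
    and s1 :: 's
  assumes r_range: "\<forall>s a. 0 \<le> r s a \<and> r s a \<le> 1"
    and wc: "weakly_communicating p"
    and J_range: "0 \<le> J \<and> J \<le> 1"
    and avg_bellman: "\<forall>s a. J + q s a =
          r s a + measure_pmf.expectation (p s a) (\<lambda>s'. Max (range (q s')))"
    and H_ge: "H \<ge> 2"
    and \<delta>_range: "0 < \<delta> \<and> \<delta> < 1"
    and disc_bellman: "\<forall>s a. Qs s a =
          r s a + (1 - 1 / H) * measure_pmf.expectation (p s a) Vs"
    and V_def: "\<forall>s. Vs s = Max (range (Qs s))"
    and sel_greedy: "\<forall>Qh s. Qh s (sel Qh s) = Max (range (Qh s))"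
  shows "measure_pmf.prob
           (oq_trajectory r p H \<delta> T (span (\<lambda>s. Max (range (q s)))) sel s1)
           {xs. (\<Sum>(s, a)\<leftarrow>xs. Vs s - Qs s a)
                  \<le> 4 * H * real CARD('s) * real CARD('a)
                    + 24 * span (\<lambda>s. Max (range (q s)))
                      * sqrt (H * real CARD('s) * real CARD('a) * real T * ln (2 * real T / \<delta>))}
         \<ge> 1 - \<delta>"
proof -
  have sp0: "0 \<le> span (\<lambda>s. Max (range (q s)))"
  proof -
    let ?h = "\<lambda>s. Max (range (q s))"
    have "Min (range ?h) \<le> ?h undefined" by (simp add: Min_le)
    also have "\<dots> \<le> Max (range ?h)" by (simp add: Max_ge)
    finally show ?thesis unfolding span_def by simp
  qed
  interpret oqa r p H \<delta> T "span (\<lambda>s. Max (range (q s)))" sel Qs Vs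
  proof unfold_locales
    show "Max (range Vs) - Min (range Vs) \<le> 2 * span (\<lambda>s. Max (range (q s)))"
      by (rule span_bound[OF avg_bellman H_ge disc_bellman V_def])
  qed (use r_range H_ge \<delta>_range disc_bellman V_def sel_greedy sp0 in auto)
  show ?thesis unfolding oq_trajectory_def using main_loc[of s1] by simp
qed

end
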